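(* Let $\lambda=\langle\lambda_j\rangle_{j=1}^\infty$ with $0<\lambda_j<\frac12$ for all $j$ and $\sum_{j=1}^\infty\lambda_j<1$. Let $\{u_j\}_{j\ge1}$ be unit vectors in a separable Hilbert space $H$ such that $\sum_{j=2}^\infty u_j\otimes u_j$ converges in the strong operator topology, and let $$B=\Big(1-\sum_{j=1}^\infty\lambda_j\Big)u_1\otimes u_1+\sum_{j=2}^\infty u_j\otimes u_j.$$ Then $\langle 1-\lambda_j\rangle_{j=1}^\infty\in\operatorname{Adm}(B)$.
   Context: For vectors $x,y$, $x\otimes y$ denotes the rank-one operator $z\mapsto(z,y)x$. $\operatorname{Adm}(B)$ is the set of sequences $\xi\in\ell^\infty_+$ such that $B=\sum_j\xi_jP_j$ for some rank-one projections $P_j$ (series converging in the strong operator topology if infinite). *)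

theory Defs
  imports "HOL-Analysis.Analysis"
begin

text \<open>HOL-Analysis only provides real inner product
spaces, so we add a complex scalar multiplication and a complex inner product
(linear in the first argument) compatible with the real structure: the real
inner product is the real part of the complex one.\<close>

class complex_inner = real_inner +
  fixes scaleC :: "complex \<Rightarrow> 'a \<Rightarrow> 'a" (infixr "*\<^sub>C" 75)
    and cinner :: "'a \<Rightarrow> 'a \<Rightarrow> complex"
  assumes scaleC_of_real: "scaleC (complex_of_real r) x = scaleR r x"
    and scaleC_add_right: "scaleC a (x + y) = scaleC a x + scaleC a y"
    and scaleC_add_left: "scaleC (a + b) x = scaleC a x + scaleC b x"
    and scaleC_scaleC: "scaleC a (scaleC b x) = scaleC (a * b) x"
    and cinner_commute: "cinner x y = cnj (cinner y x)"
    and cinner_add_left: "cinner (x + y) z = cinner x z + cinner y z"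
    and cinner_scaleC_left: "cinner (scaleC a x) y = a * cinner x y"
    and Re_cinner: "Re (cinner x y) = inner x y"

text \<open>Sanity check: the class is inhabited (by the complex numbers).\<close>
instantiation complex :: complex_inner
begin
definition scaleC_complex :: "complex \<Rightarrow> complex \<Rightarrow> complex" where
  "scaleC_complex a x = a * x"
definition cinner_complex :: "complex \<Rightarrow> complex \<Rightarrow> complex" where
  "cinner_complex x y = x * cnj y"
instance
  by standard (auto simp: scaleC_complex_def cinner_complex_def algebra_simps
      scaleR_conv_of_real inner_complex_def)
end

definition rank_one :: "'a::complex_inner \<Rightarrow> 'a \<Rightarrow> 'a \<Rightarrow> 'a" where
  "rank_one x y = (\<lambda>z. cinner z y *\<^sub>C x)"

definition rank_one_proj :: "('a::complex_inner \<Rightarrow> 'a) \<Rightarrow> bool" where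
  "rank_one_proj P \<longleftrightarrow> (\<exists>v. norm v = 1 \<and> P = rank_one v v)"

definition sot_sums :: "(nat \<Rightarrow> 'a::real_normed_vector \<Rightarrow> 'a) \<Rightarrow> ('a \<Rightarrow> 'a) \<Rightarrow> bool" where
  "sot_sums T B \<longleftrightarrow> (\<forall>z. (\<lambda>j. T j z) sums B z)"

definition sot_summable :: "(nat \<Rightarrow> 'a::real_normed_vector \<Rightarrow> 'a) \<Rightarrow> bool" where
  "sot_summable T \<longleftrightarrow> (\<exists>B. sot_sums T B)"

text \<open>Adm(B) for infinite sequences (indexed from 0): nonnegative bounded sequences
\<xi> with B = \<Sum>_j \<xi>_j P_j (SOT) for rank-one projections P_j.\<close>
definition Adm :: "('a::complex_inner \<Rightarrow> 'a) \<Rightarrow> (nat \<Rightarrow> real) set" where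
  "Adm B = {\<xi>. (\<forall>j. 0 \<le> \<xi> j) \<and> bdd_above (range \<xi>) \<and>
     (\<exists>P. (\<forall>j. rank_one_proj (P j)) \<and>
          sot_sums (\<lambda>j z. complex_of_real (\<xi> j) *\<^sub>C P j z) B)}"

definition separable_space :: "'a::topological_space itself \<Rightarrow> bool" where
  "separable_space _ \<longleftrightarrow> (\<exists>D::'a set. countable D \<and> closure D = UNIV)"

end

theory Submission
  imports Defs
begin

lemma cinner_add_right: fixes x::"'a::complex_inner" shows "cinner x (y + z) = cinner x y + cinner x z"
  by (metis cinner_commute cinner_add_left complex_cnj_add)
lemma cinner_scaleC_right: fixes x::"'a::complex_inner" shows "cinner x (a *\<^sub>C y) = cnj a * cinner x y"
  by (metis cinner_commute cinner_scaleC_left complex_cnj_mult complex_cnj_cnj)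
lemma cinner_self: fixes x::"'a::complex_inner" shows "cinner x x = complex_of_real ((norm x)^2)"
proof -
  have "Im (cinner x x) = Im (cnj (cinner x x))" by (metis cinner_commute)
  then have "Im (cinner x x) = 0" by simp
  then show ?thesis using Re_cinner[of x x] by (simp add: complex_eq_iff power2_norm_eq_inner)
qed
lemma scaleC_one: fixes x::"'a::complex_inner" shows "1 *\<^sub>C x = x"
  using scaleC_of_real[of 1 x] by simp
lemma norm_scaleC: fixes x::"'a::complex_inner" shows "norm (a *\<^sub>C x) = cmod a * norm x"
proof -
  have "(norm (a *\<^sub>C x))^2 = Re (cinner (a *\<^sub>C x) (a *\<^sub>C x))"
    by (simp add: Re_cinner power2_norm_eq_inner)
  also have "cinner (a *\<^sub>C x) (a *\<^sub>C x) = (a * cnj a) * cinner x x"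
    by (simp add: cinner_scaleC_left cinner_scaleC_right mult.assoc)
  also have "\<dots> = complex_of_real ((cmod a)^2 * (norm x)^2)"
    by (simp only: complex_mult_cnj cinner_self of_real_mult cmod_power2)
  also have "Re \<dots> = (cmod a)^2 * (norm x)^2" by simp
  finally have "(norm (a *\<^sub>C x))^2 = (cmod a * norm x)^2" by (simp add: power_mult_distrib)
  then show ?thesis by (simp add: power2_eq_iff_nonneg)
qed
lemma cinner_cs: fixes x::"'a::complex_inner" shows "cmod (cinner x y) \<le> norm x * norm y"
proof (cases "cinner x y = 0")
  case True then show ?thesis by simp
next
  case False
  define w where "w = cnj (sgn (cinner x y))"
  have "cmod (cinner x y) = Re (w * cinner x y)"
    using False by (simp add: w_def sgn_div_norm complex_mult_cnj[symmetric] divide_simps power2_eq_square cmod_def)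
  also have "\<dots> = inner (w *\<^sub>C x) y" by (simp add: cinner_scaleC_left Re_cinner[symmetric])
  also have "\<dots> \<le> norm (w *\<^sub>C x) * norm y" by (rule norm_cauchy_schwarz)
  also have "\<dots> = norm x * norm y" using False by (simp add: norm_scaleC w_def norm_sgn)
  finally show ?thesis .
qed
definition zeta :: "'a::complex_inner \<Rightarrow> 'a \<Rightarrow> complex" where
  "zeta x y = (if cinner x y = 0 then 1 else \<i> * cinner x y / complex_of_real (cmod (cinner x y)))"

lemma zeta_unit: "cnj (zeta x y) * zeta x y = 1"
proof -
  have "cmod (zeta x y) = 1" by (simp add: zeta_def norm_mult norm_divide)
  then show ?thesis using complex_norm_square[of "zeta x y"] by (simp add: mult.commute)
qed

lemma zeta_re: "Re (cnj (zeta x y) * cinner x y) = 0"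
  by (simp add: zeta_def)

definition vc :: "real \<Rightarrow> real \<Rightarrow> 'a::complex_inner \<Rightarrow> 'a \<Rightarrow> 'a" where
  "vc al be x y = complex_of_real al *\<^sub>C x + (complex_of_real be * zeta x y) *\<^sub>C y"

lemma cinner_vc_right: "cinner z (vc al be x y) = complex_of_real al * cinner z x + complex_of_real be * cnj (zeta x y) * cinner z y"
  by (simp add: vc_def cinner_add_right cinner_scaleC_right mult.assoc)

lemma lin2: fixes x::"'a::complex_inner" shows "c *\<^sub>C (A *\<^sub>C x + B *\<^sub>C y) = (c*A) *\<^sub>C x + (c*B) *\<^sub>C y"
  by (simp add: scaleC_add_right scaleC_scaleC)
lemma lin2add: fixes x::"'a::complex_inner" shows "(A *\<^sub>C x + B *\<^sub>C y) + (C *\<^sub>C x + D *\<^sub>C y) = (A + C) *\<^sub>C x + (B + D) *\<^sub>C y"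
  by (simp add: scaleC_add_left add_ac)

lemma norm_vc:
  assumes "norm x = 1" "norm y = 1" "al^2 + be^2 = 1"
  shows "norm (vc al be x y) = 1"
proof -
  define g where "g = cinner x y"
  define Z where "Z = zeta x y"
  have gy: "cinner y x = cnj g" by (simp add: g_def cinner_commute[of y x])
  have gx: "cinner x y = g" by (simp add: g_def)
  have "cinner (vc al be x y) (vc al be x y) =
     complex_of_real (al^2) + complex_of_real al * complex_of_real be * (cnj Z * g)
     + complex_of_real al * complex_of_real be * cnj (cnj Z * g) + complex_of_real (be^2) * (cnj Z * Z)"
    using assms gy gx cinner_self[of x] cinner_self[of y] unfolding vc_def Z_def[symmetric]
    by (simp add: cinner_add_left cinner_add_right cinner_scaleC_left cinner_scaleC_right algebra_simps power2_eq_square)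
  also have "Re \<dots> = al^2 + be^2"
    using zeta_re[of x y] zeta_unit[of x y] unfolding Z_def[symmetric] g_def[symmetric] by simp
  finally have "(norm (vc al be x y))^2 = 1"
    using assms by (simp add: power2_norm_eq_inner Re_cinner[symmetric])
  then show ?thesis using norm_ge_zero[of "vc al be x y"] by (auto simp add: power2_eq_1_iff)
qed

lemma rank_one_decomp:
  fixes x y z :: "'a::complex_inner"
  assumes h1: "p*a1^2 + q*a2^2 = a" and h2: "p*b1^2 + q*b2^2 = 1" and h3: "p*a1*b1 + q*a2*b2 = 0"
  shows "complex_of_real a *\<^sub>C rank_one x x z + rank_one y y z =
     complex_of_real p *\<^sub>C rank_one (vc a1 b1 x y) (vc a1 b1 x y) z
   + complex_of_real q *\<^sub>C rank_one (vc a2 b2 x y) (vc a2 b2 x y) z"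
proof -
  define Gx where "Gx = cinner z x"
  define Gy where "Gy = cinner z y"
  define Z where "Z = zeta x y"
  have cz: "cnj Z * Z = 1" using zeta_unit[of x y] by (simp add: Z_def)
  have ci: "\<And>al be. cinner z (vc al be x y) = complex_of_real al * Gx + complex_of_real be * cnj Z * Gy"
    by (simp add: cinner_vc_right Gx_def Gy_def Z_def)
  have R: "complex_of_real p *\<^sub>C rank_one (vc a1 b1 x y) (vc a1 b1 x y) z
   + complex_of_real q *\<^sub>C rank_one (vc a2 b2 x y) (vc a2 b2 x y) z =
     (complex_of_real p * ((complex_of_real a1 * Gx + complex_of_real b1 * cnj Z * Gy) * complex_of_real a1)
      + complex_of_real q * ((complex_of_real a2 * Gx + complex_of_real b2 * cnj Z * Gy) * complex_of_real a2)) *\<^sub>C x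
   + (complex_of_real p * ((complex_of_real a1 * Gx + complex_of_real b1 * cnj Z * Gy) * (complex_of_real b1 * Z))
      + complex_of_real q * ((complex_of_real a2 * Gx + complex_of_real b2 * cnj Z * Gy) * (complex_of_real b2 * Z))) *\<^sub>C y"
    unfolding rank_one_def ci unfolding vc_def Z_def[symmetric] lin2 lin2add ..
  have X: "complex_of_real p * ((complex_of_real a1 * Gx + complex_of_real b1 * cnj Z * Gy) * complex_of_real a1)
      + complex_of_real q * ((complex_of_real a2 * Gx + complex_of_real b2 * cnj Z * Gy) * complex_of_real a2)
    = complex_of_real (p*a1^2 + q*a2^2) * Gx + complex_of_real (p*a1*b1 + q*a2*b2) * cnj Z * Gy"
    by (simp add: algebra_simps power2_eq_square)
  have Y: "complex_of_real p * ((complex_of_real a1 * Gx + complex_of_real b1 * cnj Z * Gy) * (complex_of_real b1 * Z))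
      + complex_of_real q * ((complex_of_real a2 * Gx + complex_of_real b2 * cnj Z * Gy) * (complex_of_real b2 * Z))
    = complex_of_real (p*a1*b1 + q*a2*b2) * Z * Gx + complex_of_real (p*b1^2 + q*b2^2) * (cnj Z * Z) * Gy"
    by (simp add: algebra_simps power2_eq_square)
  have L: "complex_of_real a *\<^sub>C rank_one x x z + rank_one y y z = (complex_of_real a * Gx) *\<^sub>C x + Gy *\<^sub>C y"
    by (simp add: rank_one_def Gx_def Gy_def scaleC_scaleC)
  show ?thesis unfolding L R X Y h1 h2 h3 cz by simp
qed

lemma decay:
  fixes g e T t :: "nat \<Rightarrow> real"
  assumes g0: "\<And>k. 0 \<le> g k" and rec: "\<And>k. g (Suc k) \<le> t k * g k + e (Suc k)"
    and e0: "\<And>k. 0 \<le> e k" and se: "summable e" and Tpos: "\<And>k. 0 < T k"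
    and tdef: "\<And>k. t k = sqrt (T (Suc k) / T k)" and tle: "\<And>k. t k \<le> 1"
    and Tlim: "T \<longlonglongrightarrow> 0"
  shows "g \<longlonglongrightarrow> 0"
proof -
  have ind: "g (m + N) \<le> sqrt (T (m+N) / T N) * g N + (\<Sum>i<m. e (Suc i + N))" for m N
  proof (induction m)
    case 0 then show ?case using Tpos[of N] by simp
  next
    case (Suc m)
    define S where "S = (\<Sum>i<m. e (Suc i + N))"
    have S0: "0 \<le> S" unfolding S_def by (intro sum_nonneg) (simp add: e0)
    have t0: "0 \<le> t (m+N)" using Tpos[of "m+N"] Tpos[of "Suc (m+N)"] by (simp add: tdef)
    have eq: "t (m+N) * sqrt (T (m+N) / T N) = sqrt (T (Suc (m+N)) / T N)"
      using Tpos[of "m+N"] Tpos[of N] by (simp add: tdef real_sqrt_mult[symmetric])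
    have "g (Suc m + N) \<le> t (m+N) * g (m+N) + e (Suc (m+N))" using rec[of "m+N"] by simp
    also have "\<dots> \<le> t (m+N) * (sqrt (T (m+N) / T N) * g N + S) + e (Suc (m+N))"
      using Suc.IH t0 unfolding S_def by (simp add: mult_left_mono)
    also have "\<dots> = sqrt (T (Suc (m+N)) / T N) * g N + t (m+N) * S + e (Suc (m+N))"
      using eq by (simp add: algebra_simps)
    also have "\<dots> \<le> sqrt (T (Suc m + N) / T N) * g N + S + e (Suc m + N)"
      using mult_left_le_one_le[OF S0 t0 tle[of "m+N"]] by simp
    also have "\<dots> = sqrt (T (Suc m + N) / T N) * g N + (\<Sum>i<Suc m. e (Suc i + N))"
      by (simp add: S_def)
    finally show ?case .
  qed
  show ?thesis
  proof (rule LIMSEQ_I)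
    fix r :: real assume r: "0 < r"
    obtain N0 where N0: "\<forall>n\<ge>N0. norm (\<Sum>i. e (i + n)) < r/2"
      using suminf_exist_split[OF _ se, of "r/2"] r by auto
    define N where "N = Suc N0"
    have tail: "(\<Sum>i<m. e (Suc i + N)) < r/2" for m
    proof -
      have sm: "summable (\<lambda>i. e (i + Suc N))" using se by (rule summable_ignore_initial_segment)
      have "(\<Sum>i<m. e (Suc i + N)) = (\<Sum>i<m. e (i + Suc N))" by simp
      also have "\<dots> \<le> (\<Sum>i. e (i + Suc N))"
        by (rule sum_le_suminf[OF sm]) (auto simp: e0)
      also have "\<dots> < r/2" using N0[rule_format, of "Suc N"] N_def
        by (simp add: suminf_nonneg[OF sm] e0)
      finally show ?thesis .
    qed
    have "(\<lambda>n. sqrt (T n / T N) * g N) \<longlonglongrightarrow> sqrt (0 / T N) * g N"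
      using Tpos[of N] by (intro tendsto_intros Tlim) simp
    then have "(\<lambda>n. sqrt (T n / T N) * g N) \<longlonglongrightarrow> 0" by simp
    from LIMSEQ_D[OF this, of "r/2"] r obtain M where M: "\<forall>n\<ge>M. norm (sqrt (T n / T N) * g N) < r/2"
      by auto
    show "\<exists>no. \<forall>n\<ge>no. norm (g n - 0) < r"
    proof (intro exI allI impI)
      fix n assume n: "n \<ge> M + N"
      then obtain m where m: "n = m + N" by (metis add.commute le_add2 le_iff_add le_trans)
      have "g n \<le> sqrt (T n / T N) * g N + (\<Sum>i<m. e (Suc i + N))" using ind[of m N] m by simp
      also have "\<dots> < r/2 + r/2" using M[rule_format, of n] n tail[of m] by auto
      finally show "norm (g n - 0) < r" using g0[of n] by simp
    qed
  qed
qed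

lemma sq_ineq:
  fixes t s a b :: real
  assumes "0 \<le> t" "t \<le> 1" "s^2 = 1 - t^2" "0 \<le> s" "0 \<le> a" "0 \<le> b"
  shows "(t*a + s*b)^2 \<le> t * a^2 + 2 * b^2"
proof -
  have s2: "s^2 = (1-t)*(1+t)" using assms by (simp add: algebra_simps power2_eq_square)
  define u where "u = sqrt (1-t)"
  define v where "v = sqrt (1+t)"
  have u2: "u^2 = 1-t" using assms by (simp add: u_def)
  have v2: "v^2 = 1+t" using assms by (simp add: v_def)
  have uv: "u * v = s"
  proof -
    have "u * v = sqrt (1 - t^2)" by (simp add: u_def v_def real_sqrt_mult[symmetric] algebra_simps power2_eq_square)
    also have "\<dots> = s" using assms by (simp flip: assms(3))
    finally show ?thesis .
  qed
  have e1: "t*(u * a - v * b)^2 = t*(u^2*a^2 - 2*(u * v)*a*b + v^2*b^2)" by (simp add: power2_eq_square algebra_simps)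
  have "t * a^2 + (1+t) * b^2 - (t*a + s*b)^2 = t * (sqrt (1-t) * a - sqrt (1+t) * b)^2"
    unfolding u_def[symmetric] v_def[symmetric] e1 u2 v2 uv using assms(3)
    by (simp add: power2_eq_square algebra_simps) (metis distrib_left mult.right_neutral)
  moreover have "0 \<le> t * (sqrt (1-t) * a - sqrt (1+t) * b)^2" using assms by simp
  moreover have "(1+t) * b^2 \<le> 2 * b^2" using assms by (simp add: mult_right_mono)
  ultimately show ?thesis by linarith
qed

lemma cmod_zeta: "cmod (zeta x y) = 1"
  by (simp add: zeta_def norm_mult norm_divide)

lemma inner_rank_one: fixes y z :: "'a::complex_inner"
  shows "inner (rank_one y y z) z = (cmod (cinner z y))^2"
proof -
  have "inner (rank_one y y z) z = Re (cinner z y * cinner y z)"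
    by (simp add: rank_one_def Re_cinner[symmetric] cinner_scaleC_left)
  also have "cinner y z = cnj (cinner z y)" by (rule cinner_commute)
  finally show ?thesis by (simp flip: complex_norm_square)
qed

definition Tl :: "(nat \<Rightarrow> real) \<Rightarrow> nat \<Rightarrow> real" where "Tl lam k = (\<Sum>i. lam (i + k))"
definition sA where "sA lam k = sqrt (lam k / Tl lam k)"
definition tA where "tA lam k = sqrt (Tl lam (Suc k) / Tl lam k)"
definition A1 where "A1 lam k = sA lam k * sqrt (1 - Tl lam k) / sqrt (1 - lam k)"
definition B1 where "B1 lam k = tA lam k / sqrt (1 - lam k)"
definition A2 where "A2 lam k = - (tA lam k * sqrt (1 - Tl lam k) / sqrt (1 - Tl lam (Suc k)))"
definition B2 where "B2 lam k = sA lam k / sqrt (1 - Tl lam (Suc k))"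

primrec Wseq :: "(nat \<Rightarrow> real) \<Rightarrow> (nat \<Rightarrow> 'a::complex_inner) \<Rightarrow> nat \<Rightarrow> 'a" where
  "Wseq lam u 0 = u 0"
| "Wseq lam u (Suc k) = vc (A2 lam k) (B2 lam k) (Wseq lam u k) (u (Suc k))"

lemma numeric:
  fixes T T' l :: real
  assumes TT: "T = l + T'" and l0: "0 < l" and T'0: "0 < T'" and T1: "T < 1"
  defines "s \<equiv> sqrt (l / T)" and "t \<equiv> sqrt (T' / T)"
  defines "a1 \<equiv> s * sqrt (1 - T) / sqrt (1 - l)" and "b1 \<equiv> t / sqrt (1 - l)"
     and "a2 \<equiv> - (t * sqrt (1 - T) / sqrt (1 - T'))" and "b2 \<equiv> s / sqrt (1 - T')"
  shows "(1-l)*a1^2 + (1-T')*a2^2 = 1 - T" "(1-l)*b1^2 + (1-T')*b2^2 = 1"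
    "(1-l)*a1*b1 + (1-T')*a2*b2 = 0" "a1^2 + b1^2 = 1" "a2^2 + b2^2 = 1"
    "s^2 = 1 - t^2" "0 \<le> s" "0 \<le> t" "t \<le> 1" "\<bar>a2\<bar> \<le> t"
proof -
  have T0: "0 < T" using TT l0 T'0 by simp
  have l1: "l < 1" "T' < 1" using TT T1 l0 T'0 by auto
  have s2: "s^2 = l/T" using T0 l0 by (simp add: s_def)
  have t2: "t^2 = T'/T" using T0 T'0 by (simp add: t_def)
  have c2: "(sqrt (1-T))^2 = 1-T" "(sqrt (1-l))^2 = 1-l" "(sqrt (1-T'))^2 = 1-T'" using T1 l1 by auto
  have a1s: "a1^2 = (l/T)*(1-T)/(1-l)" unfolding a1_def by (simp add: power_mult_distrib power_divide s2 c2)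
  have b1s: "b1^2 = (T'/T)/(1-l)" unfolding b1_def by (simp add: power_divide t2 c2)
  have a2s: "a2^2 = (T'/T)*(1-T)/(1-T')" unfolding a2_def by (simp add: power_mult_distrib power_divide t2 c2)
  have b2s: "b2^2 = (l/T)/(1-T')" unfolding b2_def by (simp add: power_divide s2 c2)
  have nz: "1 - l \<noteq> 0" "1 - T' \<noteq> 0" "T \<noteq> 0" using l1 T0 by auto
  have lT: "l = T - T'" using TT by simp
  have nz2: "1 - (T - T') \<noteq> 0" "1 - T' \<noteq> 0" "T \<noteq> 0" using nz lT by auto
  have e1: "(1-l)*a1^2 + (1-T')*a2^2 = (l/T)*(1-T) + (T'/T)*(1-T)" unfolding a1s a2s using nz by simp
  also have "\<dots> = 1 - T" unfolding lT using nz2 by (simp add: field_simps)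
  finally show "(1-l)*a1^2 + (1-T')*a2^2 = 1 - T" .
  have "(1-l)*b1^2 + (1-T')*b2^2 = T'/T + l/T" unfolding b1s b2s using nz by simp
  also have "\<dots> = 1" unfolding lT using nz2 by (simp add: field_simps)
  finally show "(1-l)*b1^2 + (1-T')*b2^2 = 1" .
  have D: "T*(1-(T-T')) \<noteq> 0" using nz2 by simp
  have "a1^2 + b1^2 = ((T-T')*(1-T) + T')/(T*(1-(T-T')))" unfolding a1s b1s lT
    by (simp add: add_divide_distrib)
  also have "(T-T')*(1-T) + T' = T*(1-(T-T'))" by (simp add: algebra_simps)
  finally show "a1^2 + b1^2 = 1" using D by simp
  have D2: "T*(1-T') \<noteq> 0" using nz2 by simp
  have "a2^2 + b2^2 = (T'*(1-T) + (T-T'))/(T*(1-T'))" unfolding a2s b2s lT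
    by (simp add: add_divide_distrib)
  also have "T'*(1-T) + (T-T') = T*(1-T')" by (simp add: algebra_simps)
  finally show "a2^2 + b2^2 = 1" using D2 by simp
  show "s^2 = 1 - t^2" unfolding s2 t2 lT using nz2 by (simp add: field_simps)
  have sq: "sqrt (1-l) * sqrt (1-l) = 1 - l" "sqrt (1-T') * sqrt (1-T') = 1 - T'"
    using l1 by auto
  have pos: "0 < sqrt (1-l)" "0 < sqrt (1-T')" using l1 by auto
  show "(1-l)*a1*b1 + (1-T')*a2*b2 = 0"
    unfolding a1_def b1_def a2_def b2_def using pos sq
    by (simp add: field_simps)
  show "0 \<le> s" "0 \<le> t" using T0 l0 T'0 by (auto simp: s_def t_def)
  show "t \<le> 1" using T0 TT l0 by (simp add: t_def)
  have "\<bar>a2\<bar> = t * (sqrt (1 - T) / sqrt (1 - T'))" using T0 T'0 T1 l1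
    by (simp add: a2_def t_def abs_mult)
  also have "\<dots> \<le> t * 1"
    using T0 T'0 T1 l1 TT l0 by (intro mult_left_mono) (auto simp: t_def)
  finally show "\<bar>a2\<bar> \<le> t" by simp
qed

lemma Tl_facts:
  assumes pos: "\<forall>j. 0 < lam j \<and> lam j < 1/2" and sm: "summable lam"
  shows "Tl lam k = lam k + Tl lam (Suc k)" "0 < Tl lam k" "Tl lam k \<le> suminf lam"
    "Tl lam \<longlonglongrightarrow> 0"
proof -
  have smk: "summable (\<lambda>i. lam (i + k))" for k using sm by (rule summable_ignore_initial_segment)
  have rec: "Tl lam k = lam k + Tl lam (Suc k)" for k
    using suminf_split_head[OF smk[of k]] unfolding Tl_def by simp
  then show "Tl lam k = lam k + Tl lam (Suc k)" .
  show "0 < Tl lam k" unfolding Tl_def using smk pos by (intro suminf_pos) auto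
  have "Tl lam k \<le> Tl lam 0" for k
  proof (induction k)
    case (Suc k)
    have "0 < lam k" using pos by simp
    then show ?case using rec[of k] Suc.IH by linarith
  qed simp
  then show "Tl lam k \<le> suminf lam" by (simp add: Tl_def)
  have "Tl lam = (\<lambda>k. suminf lam - (\<Sum>i<k. lam i))"
    by (rule ext) (simp add: Tl_def suminf_minus_initial_segment[OF sm])
  moreover have "(\<lambda>k. suminf lam - (\<Sum>i<k. lam i)) \<longlonglongrightarrow> suminf lam - suminf lam"
    by (intro tendsto_intros summable_LIMSEQ sm)
  ultimately show "Tl lam \<longlonglongrightarrow> 0" by simp
qed

lemma num_k:
  assumes pos: "\<forall>j. 0 < lam j \<and> lam j < 1/2" and sm: "summable lam" and lt: "suminf lam < 1"
  shows "(1 - lam k)*(A1 lam k)^2 + (1 - Tl lam (Suc k))*(A2 lam k)^2 = 1 - Tl lam k"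
    "(1 - lam k)*(B1 lam k)^2 + (1 - Tl lam (Suc k))*(B2 lam k)^2 = 1"
    "(1 - lam k)*(A1 lam k)*(B1 lam k) + (1 - Tl lam (Suc k))*(A2 lam k)*(B2 lam k) = 0"
    "(A1 lam k)^2 + (B1 lam k)^2 = 1" "(A2 lam k)^2 + (B2 lam k)^2 = 1"
    "(sA lam k)^2 = 1 - (tA lam k)^2" "0 \<le> sA lam k" "0 \<le> tA lam k" "tA lam k \<le> 1"
    "\<bar>A2 lam k\<bar> \<le> tA lam k"
proof -
  note F = Tl_facts[OF pos sm]
  have T1: "Tl lam k < 1" using F(3)[of k] lt by simp
  note N = numeric[OF F(1)[of k] pos[rule_format, THEN conjunct1] F(2)[of "Suc k"] T1]
  show "(1 - lam k)*(A1 lam k)^2 + (1 - Tl lam (Suc k))*(A2 lam k)^2 = 1 - Tl lam k"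
    "(1 - lam k)*(B1 lam k)^2 + (1 - Tl lam (Suc k))*(B2 lam k)^2 = 1"
    "(1 - lam k)*(A1 lam k)*(B1 lam k) + (1 - Tl lam (Suc k))*(A2 lam k)*(B2 lam k) = 0"
    "(A1 lam k)^2 + (B1 lam k)^2 = 1" "(A2 lam k)^2 + (B2 lam k)^2 = 1"
    "(sA lam k)^2 = 1 - (tA lam k)^2" "0 \<le> sA lam k" "0 \<le> tA lam k" "tA lam k \<le> 1"
    "\<bar>A2 lam k\<bar> \<le> tA lam k"
    unfolding A1_def B1_def A2_def B2_def sA_def tA_def using N by simp_all
qed

theorem lemma3p12:
  fixes lam :: "nat \<Rightarrow> real"
    and u :: "nat \<Rightarrow> 'h::{complex_inner, complete_space}"
  assumes sep: "separable_space TYPE('h)"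
    and lam_pos: "\<forall>j. 0 < lam j \<and> lam j < 1/2"
    and lam_summable: "summable lam"
    and lam_sum: "suminf lam < 1"
    and u_unit: "\<forall>j. norm (u j) = 1"
    and tail_conv: "sot_summable (\<lambda>j. rank_one (u (Suc j)) (u (Suc j)))"
  shows "(\<lambda>j. 1 - lam j) \<in> Adm (\<lambda>z. complex_of_real (1 - suminf lam) *\<^sub>C rank_one (u 0) (u 0) z
            + (\<Sum>j. rank_one (u (Suc j)) (u (Suc j)) z))"
proof -
  note F = Tl_facts[OF lam_pos lam_summable]
  note NK = num_k[OF lam_pos lam_summable lam_sum]
  define c0 where "c0 = 1 - suminf lam"
  have c0: "0 < c0" using lam_sum c0_def by simp
  define cc where "cc k = 1 - Tl lam k" for k
  have cc0: "cc 0 = c0" by (simp add: cc_def c0_def Tl_def)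
  have cc_ge: "c0 \<le> cc k" for k using F(3)[of k] by (simp add: cc_def c0_def)
  have cc_lim: "cc \<longlonglongrightarrow> 1 - 0" unfolding cc_def[abs_def] by (intro tendsto_intros F(4))
  define W where "W = Wseq lam u"
  define Q where "Q k = vc (A1 lam k) (B1 lam k) (W k) (u (Suc k))" for k
  have W_unit: "norm (W k) = 1" for k
  proof (induction k)
    case 0 then show ?case by (simp add: W_def u_unit)
  next
    case (Suc k)
    show ?case using norm_vc[OF Suc.IH[unfolded W_def] u_unit[rule_format] NK(5)[of k]] by (simp add: W_def)
  qed
  have Q_unit: "norm (Q k) = 1" for k
    using norm_vc[OF W_unit u_unit[rule_format] NK(4)[of k]] by (simp add: Q_def)
  define FQ where "FQ j z = complex_of_real (1 - lam j) *\<^sub>C rank_one (Q j) (Q j) z" for j z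
  define EW where "EW n z = complex_of_real (cc n) *\<^sub>C rank_one (W n) (W n) z" for n z
  define GU where "GU j z = rank_one (u (Suc j)) (u (Suc j)) z" for j z
  have step: "EW k z + GU k z = FQ k z + EW (Suc k) z" for k z
    using rank_one_decomp[OF NK(1)[of k] NK(2)[of k] NK(3)[of k], where x="W k" and y="u (Suc k)" and z=z]
    by (simp add: Q_def W_def cc_def EW_def GU_def FQ_def)
  have psum: "(\<Sum>j<n. FQ j z) + EW n z = complex_of_real c0 *\<^sub>C rank_one (u 0) (u 0) z + (\<Sum>j<n. GU j z)" for n z
  proof (induction n)
    case 0 then show ?case by (simp add: EW_def cc0 W_def)
  next
    case (Suc n)
    have "(\<Sum>j<Suc n. FQ j z) + EW (Suc n) z = (\<Sum>j<n. FQ j z) + (FQ n z + EW (Suc n) z)"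
      by (simp add: add.assoc)
    also have "\<dots> = ((\<Sum>j<n. FQ j z) + EW n z) + GU n z" by (simp add: step[symmetric] add.assoc)
    also have "\<dots> = complex_of_real c0 *\<^sub>C rank_one (u 0) (u 0) z + (\<Sum>j<Suc n. GU j z)"
      by (simp add: Suc.IH add.assoc)
    finally show ?case .
  qed
  obtain Bt where Bt: "\<forall>z. (\<lambda>j. GU j z) sums Bt z"
    using tail_conv unfolding sot_summable_def sot_sums_def GU_def by blast
  have EW_lim: "(\<lambda>n. EW n z) \<longlonglongrightarrow> 0" for z
  proof -
    define g where "g k = (cmod (cinner z (W k)))^2" for k
    define e where "e k = 2 * (cmod (cinner z (u k)))^2 / c0" for k
    have rec: "g (Suc k) \<le> tA lam k * g k + e (Suc k)" for k
    proof -
      define a where "a = cmod (cinner z (W k))"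
      define m where "m = cmod (cinner z (u (Suc k)))"
      define b where "b = m / sqrt c0"
      have ci: "cinner z (W (Suc k)) = complex_of_real (A2 lam k) * cinner z (W k)
          + complex_of_real (B2 lam k) * cnj (zeta (W k) (u (Suc k))) * cinner z (u (Suc k))"
        by (simp add: W_def cinner_vc_right)
      have "cmod (cinner z (W (Suc k))) \<le> \<bar>A2 lam k\<bar> * a + \<bar>B2 lam k\<bar> * m"
        unfolding ci a_def m_def
        by (rule order.trans[OF norm_triangle_ineq]) (simp add: norm_mult cmod_zeta)
      also have "\<bar>A2 lam k\<bar> * a \<le> tA lam k * a" using NK(10)[of k] by (simp add: a_def mult_right_mono)
      also have "\<bar>B2 lam k\<bar> * m \<le> sA lam k * b"
      proof -
        have q: "sqrt c0 \<le> sqrt (1 - Tl lam (Suc k))" using cc_ge[of "Suc k"] by (simp add: cc_def)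
        have "\<bar>B2 lam k\<bar> = sA lam k / sqrt (1 - Tl lam (Suc k))" using NK(7)[of k] cc_ge[of "Suc k"] c0
          by (simp add: B2_def cc_def)
        also have "\<dots> \<le> sA lam k / sqrt c0" using NK(7)[of k] c0 q
          by (intro divide_left_mono) auto
        finally show ?thesis unfolding b_def using m_def
          by (metis (no_types, lifting) mult_right_mono norm_ge_zero times_divide_eq_left times_divide_eq_right)
      qed
      finally have le1: "cmod (cinner z (W (Suc k))) \<le> tA lam k * a + sA lam k * b" by simp
      have "g (Suc k) \<le> (tA lam k * a + sA lam k * b)^2" unfolding g_def
        by (rule power_mono[OF le1]) simp
      also have "\<dots> \<le> tA lam k * a^2 + 2 * b^2"
        using NK(6-9)[of k] by (intro sq_ineq) (use c0 in \<open>auto simp: a_def b_def m_def\<close>)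
      also have "2 * b^2 = e (Suc k)" using c0 by (simp add: b_def e_def m_def power_divide)
      finally show ?thesis by (simp add: g_def a_def)
    qed
    have "summable (\<lambda>j. inner (GU j z) z)"
      using bounded_linear.sums[OF bounded_linear_inner_left Bt[rule_format, of z]] by (rule sums_summable)
    then have "summable (\<lambda>j. (cmod (cinner z (u (Suc j))))^2)" by (simp add: GU_def inner_rank_one)
    then have "summable (\<lambda>j. (cmod (cinner z (u j)))^2)" using summable_Suc_iff[of "\<lambda>j. (cmod (cinner z (u j)))^2"] by simp
    then have se: "summable e" unfolding e_def by (intro summable_divide summable_mult)
    have g_lim: "g \<longlonglongrightarrow> 0"
    proof (rule decay[of g "tA lam" e "Tl lam"])
      show "0 \<le> g k" for k by (simp add: g_def)
      show "g (Suc k) \<le> tA lam k * g k + e (Suc k)" for k by (rule rec)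
      show "0 \<le> e k" for k using c0 by (simp add: e_def)
      show "summable e" by (rule se)
      show "0 < Tl lam k" for k by (rule F(2))
      show "tA lam k = sqrt (Tl lam (Suc k) / Tl lam k)" for k by (simp add: tA_def)
      show "tA lam k \<le> 1" for k by (rule NK(9))
      show "Tl lam \<longlonglongrightarrow> 0" by (rule F(4))
    qed
    have nEW: "norm (EW n z) = \<bar>cc n\<bar> * sqrt (g n)" for n
      by (simp add: EW_def rank_one_def norm_scaleC W_unit g_def)
    have "(\<lambda>n. \<bar>cc n\<bar> * sqrt (g n)) \<longlonglongrightarrow> \<bar>1 - 0\<bar> * sqrt 0"
      by (intro tendsto_intros cc_lim g_lim)
    then have "(\<lambda>n. norm (EW n z)) \<longlonglongrightarrow> 0" unfolding nEW by simp
    then show ?thesis by (simp add: tendsto_norm_zero_iff)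
  qed
  have sums: "(\<lambda>j. FQ j z) sums (complex_of_real (1 - suminf lam) *\<^sub>C rank_one (u 0) (u 0) z
            + (\<Sum>j. rank_one (u (Suc j)) (u (Suc j)) z))" for z
  proof -
    have smG: "summable (\<lambda>j. GU j z)" using Bt sums_summable by blast
    have "(\<lambda>n. (complex_of_real c0 *\<^sub>C rank_one (u 0) (u 0) z + (\<Sum>j<n. GU j z)) - EW n z)
        \<longlonglongrightarrow> (complex_of_real c0 *\<^sub>C rank_one (u 0) (u 0) z + (\<Sum>j. GU j z)) - 0"
      by (intro tendsto_intros summable_LIMSEQ smG EW_lim)
    moreover have "(\<lambda>n. (complex_of_real c0 *\<^sub>C rank_one (u 0) (u 0) z + (\<Sum>j<n. GU j z)) - EW n z)
        = (\<lambda>n. \<Sum>j<n. FQ j z)"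
      using psum by (auto simp: fun_eq_iff simp flip: psum)
    ultimately show ?thesis unfolding sums_def by (simp add: c0_def GU_def)
  qed
  show ?thesis
    unfolding Adm_def mem_Collect_eq
  proof (intro conjI allI)
    show "0 \<le> 1 - lam j" for j using lam_pos[rule_format, of j] by simp
    show "bdd_above (range (\<lambda>j. 1 - lam j))"
      by (rule bdd_aboveI[of _ 1]) (use lam_pos in \<open>auto simp: less_imp_le\<close>)
    show "\<exists>P. (\<forall>j. rank_one_proj (P j)) \<and>
        sot_sums (\<lambda>j z. complex_of_real (1 - lam j) *\<^sub>C P j z)
         (\<lambda>z. complex_of_real (1 - suminf lam) *\<^sub>C rank_one (u 0) (u 0) z + (\<Sum>j. rank_one (u (Suc j)) (u (Suc j)) z))"
      by (rule exI[of _ "\<lambda>j. rank_one (Q j) (Q j)"])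
        (use Q_unit sums in \<open>auto simp: rank_one_proj_def sot_sums_def FQ_def\<close>)
  qed
qed

end
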